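(* Let $X$ be a finite-dimensional simplicial complex such that for all vertices $x,y$ of $X$, $\Sigma_x\subseteq\Sigma_y$ implies $x=y$. Then the map $\Omega\colon\mathrm{Aut}(X)\to\mathrm{Aut}(\mathcal{N}(X))$, $\Omega(\varphi)=\varphi_*$, is injective.
   Context: For a vertex $x$ of $X$, $\Sigma_x$ is the collection of maximal simplices of $X$ containing $x$. $\mathcal{N}(X)$ is the nerve of the collection of maximal simplices of $X$ (vertices: maximal simplices of $X$; a finite set of them is a simplex iff their common intersection is non-empty). For $\varphi\in\mathrm{Aut}(X)$ (simplicial automorphisms), $\varphi_*$ is the simplicial automorphism of $\mathcal{N}(X)$ given on vertices by $\varphi_*(K)=\varphi(K)$. *)

theory Defs
  imports Main "HOL-Library.FuncSet"
begin

definition simplicial_complex :: "'a set set \<Rightarrow> bool" where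
  "simplicial_complex X \<longleftrightarrow>
     (\<forall>s\<in>X. finite s \<and> s \<noteq> {}) \<and>
     (\<forall>s\<in>X. \<forall>t. t \<subseteq> s \<and> t \<noteq> {} \<longrightarrow> t \<in> X)"

definition vertices :: "'a set set \<Rightarrow> 'a set" where
  "vertices X = \<Union> X"

definition finite_dimensional :: "'a set set \<Rightarrow> bool" where
  "finite_dimensional X \<longleftrightarrow> (\<exists>n::nat. \<forall>s\<in>X. card s \<le> n)"

definition maximal_simplices :: "'a set set \<Rightarrow> 'a set set" where
  "maximal_simplices X = {s \<in> X. \<forall>t\<in>X. s \<subseteq> t \<longrightarrow> t = s}"

definition Sigma_v :: "'a set set \<Rightarrow> 'a \<Rightarrow> 'a set set" where
  "Sigma_v X x = {K \<in> maximal_simplices X. x \<in> K}"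

definition nerve :: "'a set set \<Rightarrow> 'a set set set" where
  "nerve X = {S. finite S \<and> S \<noteq> {} \<and> S \<subseteq> maximal_simplices X \<and> \<Inter> S \<noteq> {}}"

definition Aut :: "'a set set \<Rightarrow> ('a \<Rightarrow> 'a) set" where
  "Aut X = {\<phi>. \<phi> \<in> extensional (vertices X) \<and> bij_betw \<phi> (vertices X) (vertices X) \<and>
              (\<forall>s. s \<subseteq> vertices X \<longrightarrow> (s \<in> X \<longleftrightarrow> \<phi> ` s \<in> X))}"

text \<open>The induced automorphism \<open>\<phi>_*\<close> of the nerve, on its vertices (maximal simplices).\<close>
definition induced :: "'a set set \<Rightarrow> ('a \<Rightarrow> 'a) \<Rightarrow> ('a set \<Rightarrow> 'a set)" where
  "induced X \<phi> = restrict (\<lambda>K. \<phi> ` K) (maximal_simplices X)"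

end

theory Submission
  imports Defs
begin

lemma aut_max_img:
  assumes "\<phi> \<in> Aut X" "K \<in> maximal_simplices X"
  shows "\<phi> ` K \<in> maximal_simplices X"
proof -
  have bij: "bij_betw \<phi> (vertices X) (vertices X)" and A: "\<And>s. s \<subseteq> vertices X \<Longrightarrow> (s \<in> X \<longleftrightarrow> \<phi> ` s \<in> X)"
    using assms(1) unfolding Aut_def by auto
  have KX: "K \<in> X" "\<And>t. t \<in> X \<Longrightarrow> K \<subseteq> t \<Longrightarrow> t = K" using assms(2) unfolding maximal_simplices_def by auto
  have Kv: "K \<subseteq> vertices X" using KX unfolding vertices_def by auto
  have "\<phi> ` K \<in> X" using A[OF Kv] KX by simp
  moreover have "T = \<phi> ` K" if T: "T \<in> X" "\<phi> ` K \<subseteq> T" for T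
  proof -
    have Tv: "T \<subseteq> vertices X" using T unfolding vertices_def by auto
    define T' where "T' = {v \<in> vertices X. \<phi> v \<in> T}"
    have img: "\<phi> ` T' = T" using Tv bij unfolding T'_def bij_betw_def by auto
    have "T' \<in> X" using A[of T'] img T by (auto simp: T'_def)
    moreover have "K \<subseteq> T'" using Kv T unfolding T'_def by auto
    ultimately have "T' = K" using KX by blast
    thus ?thesis using img by simp
  qed
  ultimately show ?thesis unfolding maximal_simplices_def by blast
qed

lemma aut_max_pre:
  assumes "\<phi> \<in> Aut X" "L \<in> maximal_simplices X"
  shows "\<exists>K \<in> maximal_simplices X. \<phi> ` K = L"
proof -
  have bij: "bij_betw \<phi> (vertices X) (vertices X)" and A: "\<And>s. s \<subseteq> vertices X \<Longrightarrow> (s \<in> X \<longleftrightarrow> \<phi> ` s \<in> X)"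
    using assms(1) unfolding Aut_def by auto
  have LX: "L \<in> X" "\<And>t. t \<in> X \<Longrightarrow> L \<subseteq> t \<Longrightarrow> t = L" using assms(2) unfolding maximal_simplices_def by auto
  have Lv: "L \<subseteq> vertices X" using LX unfolding vertices_def by auto
  define K where "K = {v \<in> vertices X. \<phi> v \<in> L}"
  have img: "\<phi> ` K = L" using Lv bij unfolding K_def bij_betw_def by auto
  have KX: "K \<in> X" using A[of K] img LX by (auto simp: K_def)
  have "T = K" if T: "T \<in> X" "K \<subseteq> T" for T
  proof -
    have Tv: "T \<subseteq> vertices X" using T unfolding vertices_def by auto
    have "\<phi> ` T \<in> X" using A[OF Tv] T by simp
    moreover have "L \<subseteq> \<phi> ` T" using img T by auto
    ultimately have "\<phi> ` T = L" using LX by blast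
    thus ?thesis using Tv T unfolding K_def by auto
  qed
  with KX img show ?thesis unfolding maximal_simplices_def by blast
qed

theorem proposition3p8:
  fixes X :: "'a set set"
  assumes "simplicial_complex X"
    and "finite_dimensional X"
    and "\<forall>x\<in>vertices X. \<forall>y\<in>vertices X. Sigma_v X x \<subseteq> Sigma_v X y \<longrightarrow> x = y"
  shows "inj_on (induced X) (Aut X)"
proof (rule inj_onI)
  fix \<phi> \<psi> assume P: "\<phi> \<in> Aut X" and Q: "\<psi> \<in> Aut X" and E: "induced X \<phi> = induced X \<psi>"
  have eq: "\<phi> ` K = \<psi> ` K" if "K \<in> maximal_simplices X" for K
    using fun_cong[OF E, of K] that unfolding induced_def by simp
  have bp: "bij_betw \<phi> (vertices X) (vertices X)" "\<phi> \<in> extensional (vertices X)"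
    and bq: "bij_betw \<psi> (vertices X) (vertices X)" "\<psi> \<in> extensional (vertices X)"
    using P Q unfolding Aut_def by auto
  have sub: "Sigma_v X (f x) \<subseteq> Sigma_v X (g x)"
    if f: "f \<in> Aut X" "g \<in> Aut X" "\<And>K. K \<in> maximal_simplices X \<Longrightarrow> f ` K = g ` K"
      and x: "x \<in> vertices X" for f g x
  proof
    fix L assume "L \<in> Sigma_v X (f x)"
    hence L: "L \<in> maximal_simplices X" "f x \<in> L" unfolding Sigma_v_def by auto
    obtain K where K: "K \<in> maximal_simplices X" "f ` K = L" using aut_max_pre[OF f(1) L(1)] by blast
    have Kv: "K \<subseteq> vertices X" using K(1) unfolding maximal_simplices_def vertices_def by auto
    have "inj_on f (vertices X)" using f(1) unfolding Aut_def bij_betw_def by auto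
    hence "x \<in> K" using L(2) K(2) Kv x by (auto dest: inj_onD)
    hence "g x \<in> L" using f(3)[OF K(1)] K(2) by auto
    thus "L \<in> Sigma_v X (g x)" using L(1) unfolding Sigma_v_def by auto
  qed
  show "\<phi> = \<psi>"
  proof
    fix x show "\<phi> x = \<psi> x"
    proof (cases "x \<in> vertices X")
      case True
      have "\<phi> x \<in> vertices X" "\<psi> x \<in> vertices X" using True bp bq by (auto simp: bij_betw_def)
      moreover have "Sigma_v X (\<phi> x) \<subseteq> Sigma_v X (\<psi> x)" using sub[OF P Q eq True] .
      ultimately show ?thesis using assms(3) by blast
    next
      case False thus ?thesis using bp(2) bq(2) by (simp add: extensional_def)
    qed
  qed
qed

end
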